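(* Let $\mathcal{X}$ be a feature space, $p(\boldsymbol{x},y)$ a joint density on $\mathcal{X}\times\{+1,-1\}$ with class priors $\pi_+=p(y=+1)$, $\pi_-=1-\pi_+$ and class-conditional densities $p_+(\boldsymbol{x})=p(\boldsymbol{x}\mid y=+1)$, $p_-(\boldsymbol{x})=p(\boldsymbol{x}\mid y=-1)$. Let pairs $(\boldsymbol{x}_i,\boldsymbol{x}_i')$, $i=1,\dots,n$, be drawn i.i.d. from the density $$\widetilde{p}(\boldsymbol{x},\boldsymbol{x}')=\frac{\pi_+^2p_+(\boldsymbol{x})p_+(\boldsymbol{x}')+\pi_-^2p_-(\boldsymbol{x})p_-(\boldsymbol{x}')+\pi_+\pi_-p_+(\boldsymbol{x})p_-(\boldsymbol{x}')}{\pi_+^2+\pi_-^2+\pi_+\pi_-},$$ and let $\widetilde{\mathcal{D}}_+=\{\boldsymbol{x}_i\}_{i=1}^n$ and $\widetilde{\mathcal{D}}_-=\{\boldsymbol{x}_i'\}_{i=1}^n$. Then the points of $\widetilde{\mathcal{D}}_+$ are independently drawn from $$\widetilde{p}_+(\boldsymbol{x})=\frac{\pi_+}{\pi_-^2+\pi_+}p_+(\boldsymbol{x})+\frac{\pi_-^2}{\pi_-^2+\pi_+}p_-(\boldsymbol{x}),$$ and the points of $\widetilde{\mathcal{D}}_-$ are independently drawn from $$\widetilde{p}_-(\boldsymbol{x}')=\frac{\pi_+^2}{\pi_+^2+\pi_-}p_+(\boldsymbol{x}')+\frac{\pi_-}{\pi_+^2+\pi_-}p_-(\boldsymbol{x}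').$$
   Context: $\widetilde{p}(\boldsymbol{x},\boldsymbol{x}')$ is the density of pairwise comparison data: pairs of unlabeled points whose (unobserved) labels $(y,y')$ are conditioned to lie in $\{(+1,+1),(+1,-1),(-1,-1)\}$, where the two labeled points are drawn independently from $p(\boldsymbol{x},y)$. *)

theory Defs
  imports "HOL-Probability.Probability"
begin

text \<open>Pairwise-comparison density on pairs, with class prior \<pi> (= pi_+),
  class-conditional densities pp (= p_+) and pn (= p_-); pi_- = 1 - \<pi>.\<close>
definition pcomp_pair :: "real \<Rightarrow> ('a \<Rightarrow> real) \<Rightarrow> ('a \<Rightarrow> real) \<Rightarrow> 'a \<times> 'a \<Rightarrow> real" where
  "pcomp_pair \<pi> pp pn z =
     (\<pi>\<^sup>2 * pp (fst z) * pp (snd z) + (1 - \<pi>)\<^sup>2 * pn (fst z) * pn (snd z)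
      + \<pi> * (1 - \<pi>) * pp (fst z) * pn (snd z))
     / (\<pi>\<^sup>2 + (1 - \<pi>)\<^sup>2 + \<pi> * (1 - \<pi>))"

definition pcomp_pos :: "real \<Rightarrow> ('a \<Rightarrow> real) \<Rightarrow> ('a \<Rightarrow> real) \<Rightarrow> 'a \<Rightarrow> real" where
  "pcomp_pos \<pi> pp pn x =
     \<pi> / ((1 - \<pi>)\<^sup>2 + \<pi>) * pp x + (1 - \<pi>)\<^sup>2 / ((1 - \<pi>)\<^sup>2 + \<pi>) * pn x"

definition pcomp_neg :: "real \<Rightarrow> ('a \<Rightarrow> real) \<Rightarrow> ('a \<Rightarrow> real) \<Rightarrow> 'a \<Rightarrow> real" where
  "pcomp_neg \<pi> pp pn x =
     \<pi>\<^sup>2 / (\<pi>\<^sup>2 + (1 - \<pi>)) * pp x + (1 - \<pi>) / (\<pi>\<^sup>2 + (1 - \<pi>)) * pn x"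

end

theory Submission
  imports Defs
begin

lemma mix_integral:
  assumes [measurable]: "pp \<in> borel_measurable M" "pn \<in> borel_measurable M"
    and "\<And>x. x \<in> space M \<Longrightarrow> 0 \<le> pp x" "\<And>x. x \<in> space M \<Longrightarrow> 0 \<le> pn x"
    and "(\<integral>\<^sup>+ x. ennreal (pp x) \<partial>M) = 1" "(\<integral>\<^sup>+ x. ennreal (pn x) \<partial>M) = 1"
    and "0 \<le> a" "0 \<le> (b::real)"
  shows "(\<integral>\<^sup>+ y. ennreal (a * pp y + b * pn y) \<partial>M) = ennreal (a + b)"
proof -
  have "(\<integral>\<^sup>+ y. ennreal (a * pp y + b * pn y) \<partial>M)
      = (\<integral>\<^sup>+ y. ennreal a * ennreal (pp y) + ennreal b * ennreal (pn y) \<partial>M)"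
    using assms by (intro nn_integral_cong) (simp add: ennreal_plus ennreal_mult)
  also have "\<dots> = (\<integral>\<^sup>+ y. ennreal a * ennreal (pp y) \<partial>M) + (\<integral>\<^sup>+ y. ennreal b * ennreal (pn y) \<partial>M)"
    by (rule nn_integral_add) auto
  also have "\<dots> = ennreal a + ennreal b"
    using assms by (simp add: nn_integral_cmult)
  also have "\<dots> = ennreal (a + b)" using assms by (simp add: ennreal_plus)
  finally show ?thesis .
qed

lemma prob_density:
  assumes [measurable]: "pp \<in> borel_measurable M" "pn \<in> borel_measurable M"
    and "\<And>x. x \<in> space M \<Longrightarrow> 0 \<le> pp x" "\<And>x. x \<in> space M \<Longrightarrow> 0 \<le> pn x"
    and "(\<integral>\<^sup>+ x. ennreal (pp x) \<partial>M) = 1" "(\<integral>\<^sup>+ x. ennreal (pn x) \<partial>M) = 1"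
    and "0 \<le> a" "0 \<le> (b::real)" "a + b = 1"
  shows "prob_space (density M (\<lambda>y. ennreal (a * pp y + b * pn y)))"
proof (rule prob_spaceI)
  have "emeasure (density M (\<lambda>y. ennreal (a * pp y + b * pn y))) (space M)
     = (\<integral>\<^sup>+ y. ennreal (a * pp y + b * pn y) \<partial>M)"
    by (subst emeasure_density) (auto intro!: nn_integral_cong simp: indicator_def)
  then show "emeasure (density M (\<lambda>y. ennreal (a * pp y + b * pn y))) (space (density M (\<lambda>y. ennreal (a * pp y + b * pn y)))) = 1"
    using mix_integral[OF assms(1-8)] assms(9) by simp
qed

lemma marg_fst:
  assumes "sigma_finite_measure M"
    and f[measurable]: "f \<in> borel_measurable (M \<Otimes>\<^sub>M M)"
    and g[measurable]: "g \<in> borel_measurable M"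
    and int: "\<And>x. x \<in> space M \<Longrightarrow> (\<integral>\<^sup>+ y. f (x, y) \<partial>M) = g x"
  shows "distr (density (M \<Otimes>\<^sub>M M) f) M fst = density M g"
proof (rule measure_eqI)
  interpret sigma_finite_measure M by fact
  show "sets (distr (density (M \<Otimes>\<^sub>M M) f) M fst) = sets (density M g)" by simp
  fix A assume A: "A \<in> sets (distr (density (M \<Otimes>\<^sub>M M) f) M fst)"
  then have A[measurable]: "A \<in> sets M" by simp
  have "emeasure (distr (density (M \<Otimes>\<^sub>M M) f) M fst) A
      = emeasure (density (M \<Otimes>\<^sub>M M) f) (fst -` A \<inter> space (M \<Otimes>\<^sub>M M))"
    by (subst emeasure_distr) auto
  also have "\<dots> = (\<integral>\<^sup>+ z. f z * indicator (fst -` A \<inter> space (M \<Otimes>\<^sub>M M)) z \<partial>(M \<Otimes>\<^sub>M M))"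
    by (subst emeasure_density) auto
  also have "\<dots> = (\<integral>\<^sup>+ x. \<integral>\<^sup>+ y. f (x, y) * indicator (fst -` A \<inter> space (M \<Otimes>\<^sub>M M)) (x, y) \<partial>M \<partial>M)"
    by (subst nn_integral_fst[symmetric]) auto
  also have "\<dots> = (\<integral>\<^sup>+ x. g x * indicator A x \<partial>M)"
  proof (rule nn_integral_cong)
    fix x assume x: "x \<in> space M"
    have "(\<integral>\<^sup>+ y. f (x, y) * indicator (fst -` A \<inter> space (M \<Otimes>\<^sub>M M)) (x, y) \<partial>M)
        = (\<integral>\<^sup>+ y. f (x, y) * indicator A x \<partial>M)"
      using x by (intro nn_integral_cong) (auto simp: indicator_def space_pair_measure)
    also have "\<dots> = (\<integral>\<^sup>+ y. f (x, y) \<partial>M) * indicator A x"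
      using x by (subst nn_integral_multc) auto
    finally show "(\<integral>\<^sup>+ y. f (x, y) * indicator (fst -` A \<inter> space (M \<Otimes>\<^sub>M M)) (x, y) \<partial>M) = g x * indicator A x"
      using int[OF x] by simp
  qed
  also have "\<dots> = emeasure (density M g) A"
    using A g by (simp add: emeasure_density mult.commute)
  finally show "emeasure (distr (density (M \<Otimes>\<^sub>M M) f) M fst) A = emeasure (density M g) A" .
qed

lemma marg_snd:
  assumes "sigma_finite_measure M"
    and f[measurable]: "f \<in> borel_measurable (M \<Otimes>\<^sub>M M)"
    and g[measurable]: "g \<in> borel_measurable M"
    and int: "\<And>y. y \<in> space M \<Longrightarrow> (\<integral>\<^sup>+ x. f (x, y) \<partial>M) = g y"
  shows "distr (density (M \<Otimes>\<^sub>M M) f) M snd = density M g"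
proof (rule measure_eqI)
  interpret pair_sigma_finite M M using assms(1) by (simp add: pair_sigma_finite_def)
  show "sets (distr (density (M \<Otimes>\<^sub>M M) f) M snd) = sets (density M g)" by simp
  fix A assume A: "A \<in> sets (distr (density (M \<Otimes>\<^sub>M M) f) M snd)"
  then have A[measurable]: "A \<in> sets M" by simp
  have "emeasure (distr (density (M \<Otimes>\<^sub>M M) f) M snd) A
      = emeasure (density (M \<Otimes>\<^sub>M M) f) (snd -` A \<inter> space (M \<Otimes>\<^sub>M M))"
    by (subst emeasure_distr) auto
  also have "\<dots> = (\<integral>\<^sup>+ z. f z * indicator (snd -` A \<inter> space (M \<Otimes>\<^sub>M M)) z \<partial>(M \<Otimes>\<^sub>M M))"
    by (subst emeasure_density) auto
  also have "\<dots> = (\<integral>\<^sup>+ y. \<integral>\<^sup>+ x. f (x, y) * indicator (snd -` A \<inter> space (M \<Otimes>\<^sub>M M)) (x, y) \<partial>M \<partial>M)"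
    by (subst nn_integral_snd[symmetric]) auto
  also have "\<dots> = (\<integral>\<^sup>+ y. g y * indicator A y \<partial>M)"
  proof (rule nn_integral_cong)
    fix y assume y: "y \<in> space M"
    have "(\<integral>\<^sup>+ x. f (x, y) * indicator (snd -` A \<inter> space (M \<Otimes>\<^sub>M M)) (x, y) \<partial>M)
        = (\<integral>\<^sup>+ x. f (x, y) * indicator A y \<partial>M)"
      using y by (intro nn_integral_cong) (auto simp: indicator_def space_pair_measure)
    also have "\<dots> = (\<integral>\<^sup>+ x. f (x, y) \<partial>M) * indicator A y"
      using y by (subst nn_integral_multc) auto
    finally show "(\<integral>\<^sup>+ x. f (x, y) * indicator (snd -` A \<inter> space (M \<Otimes>\<^sub>M M)) (x, y) \<partial>M) = g y * indicator A y"
      using int[OF y] by simp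
  qed
  also have "\<dots> = emeasure (density M g) A"
    using A g by (simp add: emeasure_density mult.commute)
  finally show "emeasure (distr (density (M \<Otimes>\<^sub>M M) f) M snd) A = emeasure (density M g) A" .
qed

lemma lift_PiM:
  assumes fin: "finite I" and N: "prob_space N" and P: "prob_space P"
    and sP: "sets P = sets M" and g: "g \<in> measurable N M" and d: "distr N M g = P"
  shows "distr (PiM I (\<lambda>_. N)) (PiM I (\<lambda>_. M)) (\<lambda>\<omega>. \<lambda>i\<in>I. g (\<omega> i)) = PiM I (\<lambda>_. P)"
proof -
  have gP: "g \<in> measurable N P" using g measurable_cong_sets[OF refl sP, of N] by simp
  have "distr (PiM I (\<lambda>_. N)) (PiM I (\<lambda>_. M)) (\<lambda>\<omega>. \<lambda>i\<in>I. g (\<omega> i))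
      = distr (PiM I (\<lambda>_. N)) (PiM I (\<lambda>_. P)) (compose I g)"
  proof (rule distr_cong)
    show "sets (PiM I (\<lambda>_. M)) = sets (PiM I (\<lambda>_. P))" by (rule sets_PiM_cong) (simp_all add: sP)
  qed (simp_all add: compose_def)
  also have "\<dots> = PiM I (\<lambda>_. distr N P g)"
    by (rule distr_PiM_finite_prob_space'[OF fin N P gP])
  also have "distr N P g = P"
  proof -
    have "distr N P g = distr N M g" by (rule distr_cong) (simp_all add: sP)
    then show ?thesis using d by simp
  qed
  finally show ?thesis .
qed

lemma pm_meas:
  assumes "pp \<in> borel_measurable M" "pn \<in> borel_measurable M"
  shows "(\<lambda>z. pcomp_pair \<pi> pp pn z) \<in> borel_measurable (M \<Otimes>\<^sub>M M)"
proof -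
  have a: "(\<lambda>z. pp (fst z)) \<in> borel_measurable (M \<Otimes>\<^sub>M M)" "(\<lambda>z. pp (snd z)) \<in> borel_measurable (M \<Otimes>\<^sub>M M)"
    "(\<lambda>z. pn (fst z)) \<in> borel_measurable (M \<Otimes>\<^sub>M M)" "(\<lambda>z. pn (snd z)) \<in> borel_measurable (M \<Otimes>\<^sub>M M)"
    using assms by (auto intro: measurable_compose[OF measurable_fst] measurable_compose[OF measurable_snd])
  show ?thesis unfolding pcomp_pair_def
    by (intro borel_measurable_divide borel_measurable_add borel_measurable_times a borel_measurable_const)
qed

lemma pos_meas:
  assumes "pp \<in> borel_measurable M" "pn \<in> borel_measurable M"
  shows "(\<lambda>z. ennreal (pcomp_pos \<pi> pp pn z)) \<in> borel_measurable M"
        "(\<lambda>z. ennreal (pcomp_neg \<pi> pp pn z)) \<in> borel_measurable M"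
  unfolding pcomp_pos_def pcomp_neg_def
  by (intro measurable_compose[OF _ measurable_ennreal] borel_measurable_add borel_measurable_times assms borel_measurable_const)+

theorem theorem2:
  fixes M :: "'a measure" and \<pi> :: real and pp pn :: "'a \<Rightarrow> real" and n :: nat
  assumes "sigma_finite_measure M"
    and "0 < \<pi>" and "\<pi> < 1"
    and "pp \<in> borel_measurable M" and "\<And>x. x \<in> space M \<Longrightarrow> 0 \<le> pp x"
    and "(\<integral>\<^sup>+ x. ennreal (pp x) \<partial>M) = 1"
    and "pn \<in> borel_measurable M" and "\<And>x. x \<in> space M \<Longrightarrow> 0 \<le> pn x"
    and "(\<integral>\<^sup>+ x. ennreal (pn x) \<partial>M) = 1"
  shows "distr (PiM {..<n} (\<lambda>_. density (M \<Otimes>\<^sub>M M) (\<lambda>z. ennreal (pcomp_pair \<pi> pp pn z))))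
              (PiM {..<n} (\<lambda>_. M)) (\<lambda>\<omega>. \<lambda>i\<in>{..<n}. fst (\<omega> i))
           = PiM {..<n} (\<lambda>_. density M (\<lambda>x. ennreal (pcomp_pos \<pi> pp pn x)))
       \<and> distr (PiM {..<n} (\<lambda>_. density (M \<Otimes>\<^sub>M M) (\<lambda>z. ennreal (pcomp_pair \<pi> pp pn z))))
              (PiM {..<n} (\<lambda>_. M)) (\<lambda>\<omega>. \<lambda>i\<in>{..<n}. snd (\<omega> i))
           = PiM {..<n} (\<lambda>_. density M (\<lambda>x. ennreal (pcomp_neg \<pi> pp pn x)))"
proof -
  define Z where "Z = \<pi>\<^sup>2 + (1 - \<pi>)\<^sup>2 + \<pi> * (1 - \<pi>)"
  have Zpos: "Z > 0" unfolding Z_def using assms(2,3)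
    by (smt (verit) mult_pos_pos zero_less_power)
  have Z1: "Z = (1 - \<pi>)\<^sup>2 + \<pi>" "Z = \<pi>\<^sup>2 + (1 - \<pi>)" unfolding Z_def by (simp_all add: power2_eq_square algebra_simps)
  define N where "N = density (M \<Otimes>\<^sub>M M) (\<lambda>z. ennreal (pcomp_pair \<pi> pp pn z))"
  define P where "P = density M (\<lambda>x. ennreal (pcomp_pos \<pi> pp pn x))"
  define Q where "Q = density M (\<lambda>x. ennreal (pcomp_neg \<pi> pp pn x))"
  have pmE: "(\<lambda>z. ennreal (pcomp_pair \<pi> pp pn z)) \<in> borel_measurable (M \<Otimes>\<^sub>M M)"
    by (rule measurable_compose[OF pm_meas[OF assms(4,7)] measurable_ennreal])
  note posmE = pos_meas(1)[OF assms(4,7)]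
  note negmE = pos_meas(2)[OF assms(4,7)]
  have p1: "0 \<le> \<pi>" "0 \<le> 1 - \<pi>" using assms(2,3) by auto
  have dP: "distr N M fst = P"
    unfolding N_def P_def
  proof (rule marg_fst[OF assms(1) pmE posmE])
    fix x assume x: "x \<in> space M"
    have e: "\<And>y. pcomp_pair \<pi> pp pn (x, y) = (\<pi>\<^sup>2 * pp x / Z) * pp y + (((1 - \<pi>)\<^sup>2 * pn x + \<pi> * (1 - \<pi>) * pp x) / Z) * pn y"
      unfolding pcomp_pair_def fst_conv snd_conv Z_def[symmetric] using Zpos by (simp add: field_simps)
    have "(\<integral>\<^sup>+ y. ennreal (pcomp_pair \<pi> pp pn (x, y)) \<partial>M) = ennreal (\<pi>\<^sup>2 * pp x / Z + ((1 - \<pi>)\<^sup>2 * pn x + \<pi> * (1 - \<pi>) * pp x) / Z)"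
      unfolding e
      by (rule mix_integral[OF assms(4,7,5,8,6,9)]) (use x assms(5,8) Zpos p1 in auto)
    also have "\<pi>\<^sup>2 * pp x / Z + ((1 - \<pi>)\<^sup>2 * pn x + \<pi> * (1 - \<pi>) * pp x) / Z = pcomp_pos \<pi> pp pn x"
      unfolding pcomp_pos_def Z1(1)[symmetric] using Zpos by (simp add: field_simps power2_eq_square)
    finally show "(\<integral>\<^sup>+ y. ennreal (pcomp_pair \<pi> pp pn (x, y)) \<partial>M) = ennreal (pcomp_pos \<pi> pp pn x)" .
  qed
  have dQ: "distr N M snd = Q"
    unfolding N_def Q_def
  proof (rule marg_snd[OF assms(1) pmE negmE])
    fix y assume y: "y \<in> space M"
    have e: "\<And>x. pcomp_pair \<pi> pp pn (x, y) = ((\<pi>\<^sup>2 * pp y + \<pi> * (1 - \<pi>) * pn y) / Z) * pp x + ((1 - \<pi>)\<^sup>2 * pn y / Z) * pn x"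
      unfolding pcomp_pair_def fst_conv snd_conv Z_def[symmetric] using Zpos by (simp add: field_simps)
    have "(\<integral>\<^sup>+ x. ennreal (pcomp_pair \<pi> pp pn (x, y)) \<partial>M) = ennreal ((\<pi>\<^sup>2 * pp y + \<pi> * (1 - \<pi>) * pn y) / Z + (1 - \<pi>)\<^sup>2 * pn y / Z)"
      unfolding e
      by (rule mix_integral[OF assms(4,7,5,8,6,9)]) (use y assms(5,8) Zpos p1 in auto)
    also have "(\<pi>\<^sup>2 * pp y + \<pi> * (1 - \<pi>) * pn y) / Z + (1 - \<pi>)\<^sup>2 * pn y / Z = pcomp_neg \<pi> pp pn y"
      unfolding pcomp_neg_def Z1(2)[symmetric] using Zpos by (simp add: field_simps power2_eq_square)
    finally show "(\<integral>\<^sup>+ x. ennreal (pcomp_pair \<pi> pp pn (x, y)) \<partial>M) = ennreal (pcomp_neg \<pi> pp pn y)" .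
  qed
  have prP: "prob_space P"
    unfolding P_def pcomp_pos_def
  proof (rule prob_density[OF assms(4,7,5,8,6,9)])
    have D: "(1 - \<pi>)\<^sup>2 + \<pi> > 0" using Zpos Z1 by simp
    then show "0 \<le> \<pi> / ((1 - \<pi>)\<^sup>2 + \<pi>)" "0 \<le> (1 - \<pi>)\<^sup>2 / ((1 - \<pi>)\<^sup>2 + \<pi>)"
      using p1 by simp_all
    show "\<pi> / ((1 - \<pi>)\<^sup>2 + \<pi>) + (1 - \<pi>)\<^sup>2 / ((1 - \<pi>)\<^sup>2 + \<pi>) = 1"
      using D by (simp add: add_divide_distrib[symmetric])
  qed
  have prQ: "prob_space Q"
    unfolding Q_def pcomp_neg_def
  proof (rule prob_density[OF assms(4,7,5,8,6,9)])
    have D: "\<pi>\<^sup>2 + (1 - \<pi>) > 0" using Zpos Z1 by simp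
    then show "0 \<le> \<pi>\<^sup>2 / (\<pi>\<^sup>2 + (1 - \<pi>))" "0 \<le> (1 - \<pi>) / (\<pi>\<^sup>2 + (1 - \<pi>))"
      using p1 by simp_all
    show "\<pi>\<^sup>2 / (\<pi>\<^sup>2 + (1 - \<pi>)) + (1 - \<pi>) / (\<pi>\<^sup>2 + (1 - \<pi>)) = 1"
      using D by (simp add: add_divide_distrib[symmetric])
  qed
  have fm: "fst \<in> measurable N M" "snd \<in> measurable N M" unfolding N_def by auto
  have prN: "prob_space N"
    by (rule prob_space_distrD[OF fm(1)]) (simp add: dP prP)
  have r1: "distr (PiM {..<n} (\<lambda>_. N)) (PiM {..<n} (\<lambda>_. M)) (\<lambda>\<omega>. \<lambda>i\<in>{..<n}. fst (\<omega> i)) = PiM {..<n} (\<lambda>_. P)"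
    by (rule lift_PiM[OF _ prN prP _ fm(1) dP]) (simp_all add: P_def)
  have r2: "distr (PiM {..<n} (\<lambda>_. N)) (PiM {..<n} (\<lambda>_. M)) (\<lambda>\<omega>. \<lambda>i\<in>{..<n}. snd (\<omega> i)) = PiM {..<n} (\<lambda>_. Q)"
    by (rule lift_PiM[OF _ prN prQ _ fm(2) dQ]) (simp_all add: Q_def)
  show ?thesis
    using r1 r2 unfolding N_def P_def Q_def by blast
qed

end
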